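(* Fix an integer $r \geq 2$. There exist constants $\alpha > 0$ and $C' > 0$ such that for all integers $n \geq 1$, $m \leq n$ and $2 \leq k \leq m$, the probability that a random DFA with $n$ states over an alphabet of size $r$ contains a $k$-periodic closed communicating class of size $m$ is at most $C' e^{-\alpha m}$.
   Context: A DFA is a tuple $A = \langle \Sigma, Q, q_0, \tau, \phi\rangle$ with finite alphabet $\Sigma$, finite state set $Q$, initial state $q_0$, transition function $\tau : Q \times \Sigma \to Q$ and termination function $\phi : Q \to \{0,1\}$. Extend $\tau$ to strings as usual and write $\tau_\star(S) = \{\tau(q,x) : q \in S, x \in \Sigma^\star\}$ and $\tau_1(S) = \{\tau(q,\sigma): q \in S, \sigma \in \Sigma\}$ for $S \subseteq Q$. Two states communicate if each is reachable from the other by some string; the equivalence classes are communicating classes. A communicating class $Q'$ is closed if $\tau_\star(Q') = Q'$. For $k > 1$, a closed communicating class $Q'$ is $k$-periodic if there is a partition of $Q'$ into $k$ nonempty parts $Q'_0,\ldots,Q'_{k-1}$ with $\tau_1(Q'_i) = Q'_{(i+1) \bmod k}$ for all $i$. A random DFA with $n$ states over an alphabet $\Sigma$ of size $r$: $Q = [n]$, initial state uniform in $Q$, each $\tau(q,\sigma)$ uniform in $Q$, each $\phi(q)$ uniform in $\{0,1\}$, all independent. *)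

theory Defs
  imports "HOL-Probability.Probability"
begin

text \<open>States are Q = {0..<n}, alphabet Sigma = {0..<r}. A DFA is a triple
  (q0, tau, phi); tau is represented as a function on pairs (state, letter).\<close>

type_synonym dfa = "nat \<times> (nat \<times> nat \<Rightarrow> nat) \<times> (nat \<Rightarrow> bool)"

definition trans :: "dfa \<Rightarrow> nat \<times> nat \<Rightarrow> nat" where
  "trans D = fst (snd D)"

fun tau_word :: "(nat \<times> nat \<Rightarrow> nat) \<Rightarrow> nat \<Rightarrow> nat list \<Rightarrow> nat" where
  "tau_word \<tau> q [] = q"
| "tau_word \<tau> q (a # w) = tau_word \<tau> (\<tau> (q, a)) w"

definition tau_star :: "nat \<Rightarrow> (nat \<times> nat \<Rightarrow> nat) \<Rightarrow> nat set \<Rightarrow> nat set" where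
  "tau_star r \<tau> S = {tau_word \<tau> q w | q w. q \<in> S \<and> w \<in> lists {..<r}}"

definition tau_one :: "nat \<Rightarrow> (nat \<times> nat \<Rightarrow> nat) \<Rightarrow> nat set \<Rightarrow> nat set" where
  "tau_one r \<tau> S = {\<tau> (q, a) | q a. q \<in> S \<and> a \<in> {..<r}}"

definition communicate :: "nat \<Rightarrow> (nat \<times> nat \<Rightarrow> nat) \<Rightarrow> nat \<Rightarrow> nat \<Rightarrow> bool" where
  "communicate r \<tau> p q \<longleftrightarrow> q \<in> tau_star r \<tau> {p} \<and> p \<in> tau_star r \<tau> {q}"

definition comm_class :: "nat \<Rightarrow> nat \<Rightarrow> (nat \<times> nat \<Rightarrow> nat) \<Rightarrow> nat set \<Rightarrow> bool" where
  "comm_class n r \<tau> C \<longleftrightarrow> (\<exists>q \<in> {..<n}. C = {p \<in> {..<n}. communicate r \<tau> q p})"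

definition closed_comm_class :: "nat \<Rightarrow> nat \<Rightarrow> (nat \<times> nat \<Rightarrow> nat) \<Rightarrow> nat set \<Rightarrow> bool" where
  "closed_comm_class n r \<tau> C \<longleftrightarrow> comm_class n r \<tau> C \<and> tau_star r \<tau> C = C"

definition periodic_class :: "nat \<Rightarrow> nat \<Rightarrow> nat \<Rightarrow> (nat \<times> nat \<Rightarrow> nat) \<Rightarrow> nat set \<Rightarrow> bool" where
  "periodic_class k n r \<tau> C \<longleftrightarrow> k > 1 \<and> closed_comm_class n r \<tau> C \<and>
     (\<exists>P :: nat \<Rightarrow> nat set.
        (\<forall>i<k. P i \<noteq> {}) \<and>
        (\<forall>i<k. \<forall>j<k. i \<noteq> j \<longrightarrow> P i \<inter> P j = {}) \<and>
        (\<Union>i<k. P i) = C \<and>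
        (\<forall>i<k. tau_one r \<tau> (P i) = P ((i + 1) mod k)))"

definition has_periodic_class :: "nat \<Rightarrow> nat \<Rightarrow> nat \<Rightarrow> nat \<Rightarrow> dfa \<Rightarrow> bool" where
  "has_periodic_class n r k m D \<longleftrightarrow>
     (\<exists>C. periodic_class k n r (trans D) C \<and> card C = m)"

definition dfa_space :: "nat \<Rightarrow> nat \<Rightarrow> dfa set" where
  "dfa_space n r = {(q0, \<tau>, \<phi>). q0 \<in> {..<n} \<and>
       \<tau> \<in> ({..<n} \<times> {..<r}) \<rightarrow>\<^sub>E {..<n} \<and> \<phi> \<in> {..<n} \<rightarrow>\<^sub>E (UNIV :: bool set)}"

definition random_dfa :: "nat \<Rightarrow> nat \<Rightarrow> dfa pmf" where
  "random_dfa n r = pmf_of_set (dfa_space n r)"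

end

theory Submission
  imports Defs
begin

lemma fact_L2: "a \<ge> 1 \<Longrightarrow> a ^ s * fact (a - 1) \<le> (fact (a + s - 1) :: nat)"
proof (induction s)
  case 0 then show ?case by simp
next
  case (Suc s)
  have "a ^ Suc s * fact (a - 1) = a * (a ^ s * fact (a - 1))" by simp
  also have "\<dots> \<le> a * fact (a + s - 1)" using Suc by simp
  also have "\<dots> \<le> (a + s) * fact (a + s - 1)" by simp
  also have "\<dots> = fact (a + Suc s - 1)" using Suc.prems fact_reduce[where 'a=nat, of "a + s"] by simp
  finally show ?case .
qed

lemma fact_L3: "a \<ge> 1 \<Longrightarrow> fact (a + j - 1) \<le> (a + j) ^ j * (fact (a - 1) :: nat)"
proof (induction j)
  case 0 then show ?case by simp
next
  case (Suc j)
  have "fact (a + Suc j - 1) = (a + j) * fact (a + j - 1)" using Suc.prems fact_reduce[where 'a=nat, of "a + j"] by simp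
  also have "\<dots> \<le> (a + j) * ((a + j) ^ j * fact (a - 1))" using Suc by simp
  also have "\<dots> \<le> (a + Suc j) * ((a + Suc j) ^ j * fact (a - 1))"
    by (intro mult_mono power_mono) auto
  also have "\<dots> = (a + Suc j) ^ Suc j * fact (a - 1)" by (simp only: power_Suc mult.assoc)
  finally show ?case .
qed

lemma fact_L1:
  assumes "p \<ge> 1" "t \<ge> 1"
  shows "p ^ t * fact (p - 1) \<le> p ^ p * (fact (t - 1) :: nat)"
proof (cases "p \<le> t")
  case True
  then obtain j where t: "t = p + j" using le_Suc_ex by blast
  have "p ^ t * fact (p - 1) = p ^ p * (p ^ j * fact (p - 1))" by (simp add: t power_add)
  also have "\<dots> \<le> p ^ p * fact (p + j - 1)" using fact_L2[OF assms(1)] by simp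
  finally show ?thesis by (simp add: t)
next
  case False
  then obtain j where p: "p = t + j" by (metis le_Suc_ex nat_le_linear)
  have "p ^ t * fact (p - 1) \<le> p ^ t * (p ^ j * fact (t - 1))"
    using fact_L3[OF assms(2), of j] by (simp add: p)
  also have "\<dots> = p ^ p * fact (t - 1)" by (simp add: p power_add)
  finally show ?thesis .
qed

lemma pow_exp_ln: "0 < x \<Longrightarrow> exp (real n * ln x) = x ^ n"
  by (simp add: exp_of_nat_mult)

lemma e_ineq: "(k::nat) \<ge> 1 \<Longrightarrow> exp 1 * real k ^ (k + 1) \<le> real (k + 1) ^ (k + 1)"
proof -
  assume k: "k \<ge> 1"
  have "ln (real k / real (k+1)) \<le> real k / real (k+1) - 1"
    using k by (intro ln_le_minus_one) auto
  also have "\<dots> = - 1 / real (k+1)" by (simp add: field_simps)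
  finally have "1 \<le> real (k+1) * (ln (real (k+1)) - ln (real k))"
    using k by (simp add: ln_div field_simps)
  hence "exp 1 \<le> exp (real (k+1) * ln (real (k+1)) - real (k+1) * ln (real k))"
    by (simp add: algebra_simps)
  also have "\<dots> = real (k + 1) ^ (k + 1) / real k ^ (k + 1)"
    using k by (simp only: exp_diff pow_exp_ln of_nat_0_less_iff)
  finally have "exp 1 \<le> real (k + 1) ^ (k + 1) / real k ^ (k + 1)" .
  moreover have kpos: "0 < real k ^ (k+1)" using k by simp
  ultimately show ?thesis using pos_le_divide_eq[OF kpos] by blast
qed

lemma fact_ratio:
  assumes "p \<ge> 1"
  shows "fact (p + j - 1) / fact (p - 1) \<le> real (p + j) ^ (p + j) * exp (- real j) / real p ^ p"
proof (induction j)
  case 0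
  have "real p ^ p \<noteq> 0" using assms by simp
  then show ?case by simp
next
  case (Suc j)
  define q where "q = p + j"
  have q: "q \<ge> 1" using assms by (simp add: q_def)
  have h: "exp (- real (Suc j)) * exp 1 = exp (- real j)" by (simp flip: exp_add)
  have eq: "real q ^ (q + 1) * exp (- real j) = (exp 1 * real q ^ (q + 1)) * exp (- real (Suc j))"
    by (simp only: h[symmetric] mult_ac)
  have "fact (p + Suc j - 1) / fact (p - 1) = real q * (fact (q - 1) / fact (p - 1))"
    using assms fact_reduce[of "p + j"] by (simp add: q_def)
  also have "\<dots> \<le> real q * (real q ^ q * exp (- real j) / real p ^ p)"
    using Suc by (intro mult_left_mono) (auto simp: q_def)
  also have "\<dots> = (real q ^ (q + 1) * exp (- real j)) / real p ^ p"
    by (simp add: mult.assoc)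
  also have "\<dots> = (exp 1 * real q ^ (q + 1)) * exp (- real (Suc j)) / real p ^ p"
    by (simp only: eq)
  also have "\<dots> \<le> real (q + 1) ^ (q + 1) * exp (- real (Suc j)) / real p ^ p"
    using e_ineq[OF q] by (intro divide_right_mono mult_right_mono) auto
  also have "\<dots> = real (p + Suc j) ^ (p + Suc j) * exp (- real (Suc j)) / real p ^ p"
    by (simp add: q_def)
  finally show ?case .
qed


lemma binom_term: "p \<le> m \<Longrightarrow> (m choose p) * p ^ p * (m - p) ^ (m - p) \<le> (m::nat) ^ m"
proof -
  assume pm: "p \<le> m"
  have "m ^ m = (p + (m - p)) ^ m" using pm by simp
  also have "\<dots> = (\<Sum>k\<le>m. (m choose k) * p ^ k * (m - p) ^ (m - k))"
    by (simp add: binomial_ring)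
  also have "\<dots> \<ge> (m choose p) * p ^ p * (m - p) ^ (m - p)"
    by (rule member_le_sum[where f = "\<lambda>k. (m choose k) * p ^ k * (m - p) ^ (m - k)"]) (use pm in auto)
  finally show ?thesis .
qed

lemma ln_le_div_e: "0 < (z::real) \<Longrightarrow> ln z \<le> z / exp 1"
proof -
  assume z: "0 < z"
  have "ln (z / exp 1) \<le> z / exp 1 - 1" using z by (intro ln_le_minus_one) auto
  thus ?thesis using z by (simp add: ln_div)
qed

lemma e_gt: "exp 1 > (8/3::real)"
proof -
  have "exp 1 > (1 + 1/30) powr (30::real)" by (rule exp_1_gt_powr) simp
  moreover have "(1 + 1/30) powr (30::real) = (31/30::real)^30" by (simp add: powr_realpow)
  moreover have "(31/30::real)^30 > 8/3" by (simp add: power_divide)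
  ultimately show ?thesis by linarith
qed

lemma ylem:
  assumes "0 < y" "y < (1::real)"
  shows "(1 - y) * ln (1 - y) - y * ln y \<le> (1 - y) / exp 1"
proof -
  have e: "exp 1 > (0::real)" by simp
  have a: "ln (1 - y) \<le> - y" using ln_le_minus_one[of "1 - y"] assms by simp
  have a2: "(1 - y) * ln (1 - y) \<le> y * y - y"
  proof -
    have "(1 - y) * ln (1 - y) \<le> (1 - y) * (- y)" using mult_left_mono[OF a, of "1 - y"] assms by simp
    thus ?thesis by (simp add: algebra_simps)
  qed
  have b1: "- y * ln y \<le> 1 / exp 1"
  proof -
    have "ln (1 / y) \<le> (1/y) / exp 1" using ln_le_div_e[of "1/y"] assms by simp
    hence "- ln y \<le> 1 / (y * exp 1)" using assms by (simp add: ln_div)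
    hence "y * (- ln y) \<le> y * (1 / (y * exp 1))" using assms by (intro mult_left_mono) auto
    thus ?thesis using assms by simp
  qed
  have b2: "- y * ln y \<le> 1 - y"
  proof -
    have "ln (1 / y) \<le> 1 / y - 1" using ln_le_minus_one[of "1/y"] assms by simp
    hence "- ln y \<le> 1 / y - 1" using assms by (simp add: ln_div)
    hence "y * (- ln y) \<le> y * (1 / y - 1)" using assms by (intro mult_left_mono) auto
    thus ?thesis using assms by (simp add: algebra_simps)
  qed
  show ?thesis
  proof (cases "y \<le> 1 - 1 / exp 1")
    case True
    have "y * (y - 1 + 1 / exp 1) \<le> 0" using True assms by (intro mult_nonneg_nonpos) auto
    hence "1 / exp 1 + (y * y - y) \<le> (1 - y) / exp 1" by (simp add: algebra_simps diff_divide_distrib)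
    thus ?thesis using a2 b1 by linarith
  next
    case False
    hence "1 - y < 1 / exp 1" by simp
    hence "(1 - y) * (1 - y) \<le> (1 - y) * (1 / exp 1)" using assms by (intro mult_left_mono) auto
    hence "(1 - y) + (y * y - y) \<le> (1 - y) / exp 1" by (simp add: algebra_simps)
    thus ?thesis using a2 b2 by linarith
  qed
qed

lemma closed_bound:
  assumes "1 \<le> m" "m \<le> (n::nat)"
  shows "real (n choose m) * (real m / real n) ^ (2 * m) \<le> exp (real m / exp 1)"
proof (cases "m = n")
  case True
  thus ?thesis using assms by simp
next
  case False
  define d where "d = n - m"
  have d: "d \<ge> 1" "n = m + d" using False assms by (auto simp: d_def)
  have mpos: "real m > 0" "real d > 0" "real n > 0" using d assms by auto
  have B: "real (n choose m) * real m ^ m * real d ^ d \<le> real n ^ n"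
    using binom_term[of m n] assms unfolding d_def by (metis of_nat_le_iff of_nat_mult of_nat_power)
  have B2: "real (n choose m) \<le> real n ^ n / (real m ^ m * real d ^ d)"
    using B mpos by (simp add: field_simps)
  define Z where "Z = real n ^ n / (real m ^ m * real d ^ d) * (real m / real n) ^ (2 * m)"
  have "real (n choose m) * (real m / real n) ^ (2 * m) \<le> Z"
    unfolding Z_def by (intro mult_right_mono B2) auto
  moreover have "Z > 0" unfolding Z_def using mpos by simp
  moreover have "ln Z \<le> real m / exp 1"
  proof -
    have "ln Z = real n * ln (real n) - real m * ln (real m) - real d * ln (real d)
                 + 2 * real m * (ln (real m) - ln (real n))"
      unfolding Z_def using mpos by (simp add: ln_mult ln_div ln_realpow)
    also have "\<dots> = real n * ((1 - real d / real n) * ln (1 - real d / real n)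
                  - (real d / real n) * ln (real d / real n))"
    proof -
      have h1: "1 - real d / real n = real m / real n" using d mpos by (simp add: field_simps)
      have h2: "real n * (real m / real n) = real m" "real n * (real d / real n) = real d" using mpos by auto
      have h3: "real n = real m + real d" using d by simp
      have "real n * ((real m / real n) * ln (real m / real n) - (real d / real n) * ln (real d / real n))
          = (real n * (real m / real n)) * ln (real m / real n) - (real n * (real d / real n)) * ln (real d / real n)"
        by (simp only: algebra_simps)
      also have "\<dots> = real m * (ln (real m) - ln (real n)) - real d * (ln (real d) - ln (real n))"
        using mpos by (simp add: h2 ln_div)
      also have "\<dots> = real n * ln (real n) - real m * ln (real m) - real d * ln (real d)
                 + 2 * real m * (ln (real m) - ln (real n))"
        by (simp only: h3 algebra_simps)
      finally show ?thesis unfolding h1 by simp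
    qed
    also have "\<dots> \<le> real n * ((1 - real d / real n) / exp 1)"
      using mpos d by (intro mult_left_mono ylem) auto
    also have "\<dots> = real m / exp 1"
    proof -
      have h1: "1 - real d / real n = real m / real n" using d mpos by (simp add: field_simps)
      show ?thesis unfolding h1 using mpos by simp
    qed
    finally show ?thesis .
  qed
  ultimately show ?thesis by (metis exp_ln exp_le_cancel_iff order_trans)
qed

lemma quad_aux: "2*(p::real) \<le> m \<Longrightarrow> 0 < p \<Longrightarrow> (4*p - 5*m/4)*m \<le> (m+p)*p"
proof -
  assume a: "2*p \<le> m" "0 < p"
  have "0 \<le> (m - 2*p) * (5*m - 2*p)" using a by (intro mult_nonneg_nonneg) auto
  also have "(m - 2*p) * (5*m - 2*p) = 4 * ((m+p)*p - (4*p - 5*m/4)*m)" by algebra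
  finally have "0 \<le> (m+p)*p - (4*p - 5*m/4)*m" by simp
  thus ?thesis by simp
qed

lemma part_bound:
  assumes "1 \<le> p" "2 * p \<le> m"
  shows "real (m choose p) * (real (m - p) / real m) ^ (2 * m) * exp (4 * real p - 2 * real m)
         \<le> exp (real m / exp 1 - 3 * real m / 4)"
proof -
  define q where "q = m - p"
  have q: "q \<ge> 1" "m = p + q" "p \<le> q" using assms by (auto simp: q_def)
  have pos: "real p > 0" "real q > 0" "real m > 0" using q assms by auto
  have Bn: "(m choose p) * p ^ p * q ^ q \<le> m ^ m" using binom_term[of p m] assms by (simp add: q_def)
  hence "real ((m choose p) * p ^ p * q ^ q) \<le> real (m ^ m)" by (simp only: of_nat_le_iff)
  hence B: "real (m choose p) * (real p ^ p * real q ^ q) \<le> real m ^ m" by (simp add: mult.assoc)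
  have ppos: "real p ^ p * real q ^ q > 0" using pos by simp
  have B2: "real (m choose p) \<le> real m ^ m / (real p ^ p * real q ^ q)"
    using B ppos by (simp add: pos_le_divide_eq)
  define Z where "Z = real m ^ m / (real p ^ p * real q ^ q) * (real q / real m) ^ (2 * m) * exp (4 * real p - 2 * real m)"
  have le1: "real (m choose p) * (real q / real m) ^ (2 * m) * exp (4 * real p - 2 * real m) \<le> Z"
    unfolding Z_def by (intro mult_right_mono B2) auto
  have Zpos: "Z > 0" unfolding Z_def using pos by simp
  have lnZ: "ln Z \<le> real m / exp 1 - 3 * real m / 4"
  proof -
    have "ln Z = real m * ln (real m) - real p * ln (real p) - real q * ln (real q)
                 + 2 * real m * (ln (real q) - ln (real m)) + (4 * real p - 2 * real m)"
      unfolding Z_def using pos by (simp add: ln_mult ln_div ln_realpow)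
    also have "\<dots> = (real m + real p) * (ln (real q) - ln (real m)) + real p * (ln (real m) - ln (real p))
                   + 4 * real p - 2 * real m"
    proof -
      have h: "real m = real p + real q" using q by simp
      show ?thesis using h by algebra
    qed
    also have "\<dots> \<le> - ((real m + real p) * real p / real m) + real m / exp 1 + 4 * real p - 2 * real m"
    proof -
      have "ln (real q) - ln (real m) = ln (real q / real m)" using pos by (simp add: ln_div)
      also have "\<dots> \<le> real q / real m - 1" using pos by (intro ln_le_minus_one) auto
      also have "\<dots> = - real p / real m" using pos q by (simp add: field_simps)
      finally have l1: "ln (real q) - ln (real m) \<le> - real p / real m" .
      have "ln (real m) - ln (real p) = ln (real m / real p)" using pos by (simp add: ln_div)
      also have "\<dots> \<le> (real m / real p) / exp 1" using pos by (intro ln_le_div_e) auto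
      finally have "real p * (ln (real m) - ln (real p)) \<le> real p * ((real m / real p) / exp 1)"
        using pos by (intro mult_left_mono) auto
      also have "\<dots> = real m / exp 1" using pos by simp
      finally have l2: "real p * (ln (real m) - ln (real p)) \<le> real m / exp 1" .
      have l1': "(real m + real p) * (ln (real q) - ln (real m)) \<le> (real m + real p) * (- real p / real m)"
        using l1 pos by (intro mult_left_mono) auto
      have "(real m + real p) * (- real p / real m) = - ((real m + real p) * real p / real m)" by simp
      thus ?thesis using l1' l2 by linarith
    qed
    also have "\<dots> \<le> real m / exp 1 - 3 * real m / 4"
    proof -
      have "(4 * real p - 5 * real m / 4) * real m \<le> (real m + real p) * real p"
        using quad_aux[of "real p" "real m"] assms pos by simp
      hence "4 * real p - 5 * real m / 4 \<le> (real m + real p) * real p / real m"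
        using pos by (simp add: pos_le_divide_eq)
      thus ?thesis by linarith
    qed
    finally show ?thesis .
  qed
  have "Z = exp (ln Z)" using Zpos by simp
  also have "\<dots> \<le> exp (real m / exp 1 - 3 * real m / 4)" using lnZ by simp
  finally have "Z \<le> exp (real m / exp 1 - 3 * real m / 4)" .
  thus ?thesis using le1 unfolding q_def by linarith
qed


definition Fn :: "nat \<Rightarrow> nat \<Rightarrow> nat set \<Rightarrow> (nat \<times> nat \<Rightarrow> nat) set" where
  "Fn n r X = PiE (X \<times> {..<r}) (\<lambda>_. {..<n})"

fun Good :: "nat \<Rightarrow> nat set \<Rightarrow> nat \<Rightarrow> nat set \<Rightarrow> nat set \<Rightarrow> (nat \<times> nat \<Rightarrow> nat) \<Rightarrow> bool" where
  "Good r A0 0 A R g = (R = {} \<and> tau_one r g A \<subseteq> A0)"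
| "Good r A0 (Suc L) A R g = (tau_one r g A \<noteq> {} \<and> tau_one r g A \<subseteq> R \<and>
      Good r A0 L (tau_one r g A) (R - tau_one r g A) g)"

lemma tau_one_cong:
  assumes "\<forall>x\<in>A \<times> {..<r}. g x = g' x"
  shows "tau_one r g A = tau_one r g' A"
  using assms unfolding tau_one_def by force

lemma Good_cong:
  "\<forall>x\<in>(A \<union> R) \<times> {..<r}. g x = g' x \<Longrightarrow> Good r A0 L A R g = Good r A0 L A R g'"
proof (induction L arbitrary: A R)
  case 0
  have "tau_one r g A = tau_one r g' A" using 0 by (intro tau_one_cong) auto
  then show ?case by simp
next
  case (Suc L)
  have t: "tau_one r g A = tau_one r g' A" using Suc.prems by (intro tau_one_cong) auto
  show ?case
  proof (cases "tau_one r g A \<subseteq> R")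
    case True
    let ?B = "tau_one r g A"
    have "\<forall>x\<in>(?B \<union> (R - ?B)) \<times> {..<r}. g x = g' x" using Suc.prems True by auto
    hence "Good r A0 L ?B (R - ?B) g = Good r A0 L ?B (R - ?B) g'" by (rule Suc.IH)
    then show ?thesis using t by simp
  next
    case False
    then show ?thesis using t by simp
  qed
qed

lemma card_split:
  assumes fin: "finite I" "finite J" "I \<inter> J = {}" "\<And>x. finite (F x)"
    and P: "\<And>f g. \<forall>x\<in>I. f x = g x \<Longrightarrow> P f = P g"
    and Q: "\<And>f g. \<forall>x\<in>J. f x = g x \<Longrightarrow> Q f = Q g"
  shows "card {f \<in> PiE (I \<union> J) F. P f \<and> Q f} \<le> card {f \<in> PiE I F. P f} * card {f \<in> PiE J F. Q f}"
proof -
  let ?S = "{f \<in> PiE (I \<union> J) F. P f \<and> Q f}"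
  let ?h = "\<lambda>f. (restrict f I, restrict f J)"
  have inj: "inj_on ?h ?S"
  proof (rule inj_onI)
    fix f g assume f: "f \<in> ?S" and g: "g \<in> ?S" and eq: "?h f = ?h g"
    show "f = g"
    proof (rule ext)
      fix x
      show "f x = g x"
      proof (cases "x \<in> I \<union> J")
        case True
        then show ?thesis using eq by (auto dest!: fun_cong[where x = x] simp: restrict_def split: if_splits)
      next
        case False
        then show ?thesis using f g by (auto simp: PiE_def extensional_def)
      qed
    qed
  qed
  have sub: "?h ` ?S \<subseteq> {f \<in> PiE I F. P f} \<times> {f \<in> PiE J F. Q f}"
  proof
    fix y assume "y \<in> ?h ` ?S"
    then obtain f where f: "f \<in> ?S" and y: "y = ?h f" by blast
    have "restrict f I \<in> PiE I F" using f by (auto simp: PiE_def Pi_def)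
    moreover have "restrict f J \<in> PiE J F" using f by (auto simp: PiE_def Pi_def)
    moreover have "P (restrict f I)" using f P[of "restrict f I" f] by auto
    moreover have "Q (restrict f J)" using f Q[of "restrict f J" f] by auto
    ultimately show "y \<in> {f \<in> PiE I F. P f} \<times> {f \<in> PiE J F. Q f}" using y by auto
  qed
  have f1: "finite {f \<in> PiE I F. P f}"
    by (rule finite_subset[of _ "PiE I F"]) (use fin in \<open>auto intro!: finite_PiE\<close>)
  have f2: "finite {f \<in> PiE J F. Q f}"
    by (rule finite_subset[of _ "PiE J F"]) (use fin in \<open>auto intro!: finite_PiE\<close>)
  have finB: "finite ({f \<in> PiE I F. P f} \<times> {f \<in> PiE J F. Q f})"
    using f1 f2 by simp
  have "card ?S \<le> card ({f \<in> PiE I F. P f} \<times> {f \<in> PiE J F. Q f})"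
    by (rule card_inj_on_le[OF inj sub finB])
  thus ?thesis by (simp add: card_cartesian_product)
qed


definition Mx :: "nat \<Rightarrow> nat \<Rightarrow> real" where
  "Mx p \<rho> = fact (\<rho> - 1) * real p ^ p / fact (p - 1)"

definition Bd :: "nat \<Rightarrow> nat \<Rightarrow> nat \<Rightarrow> nat \<Rightarrow> real" where
  "Bd r p a \<rho> = (if \<rho> = 0 then real p ^ (r * a) else real \<rho> ^ (r * a) * Mx p \<rho> ^ r)"

lemma Mx_nonneg: "Mx p \<rho> \<ge> 0" unfolding Mx_def by simp

lemma Bd_nonneg: "Bd r p a \<rho> \<ge> 0" unfolding Bd_def using Mx_nonneg by simp

lemma Bd_le:
  assumes "1 \<le> p" "1 \<le> s" "s \<le> \<rho>"
  shows "Bd r p s (\<rho> - s) \<le> Mx p \<rho> ^ r"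
proof (cases "s = \<rho>")
  case True
  have fpos: "(fact (p - 1) :: real) > 0" by simp
  have "p ^ s * fact (p - 1) \<le> p ^ p * (fact (s - 1) :: nat)" using fact_L1[of p s] assms by simp
  hence "real (p ^ s * fact (p - 1)) \<le> real (p ^ p * fact (s - 1))" by (simp only: of_nat_le_iff)
  hence "real p ^ s * fact (p - 1) \<le> fact (s - 1) * real p ^ p" by (simp add: of_nat_fact mult.commute)
  hence "real p ^ s \<le> Mx p s" unfolding Mx_def using fpos by (simp add: pos_le_divide_eq)
  hence "(real p ^ s) ^ r \<le> Mx p s ^ r" by (intro power_mono) auto
  thus ?thesis using True by (simp add: Bd_def power_mult mult.commute)
next
  case False
  hence sl: "s < \<rho>" using assms by simp
  have fpos: "(fact (p - 1) :: real) > 0" by simp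
  have "(\<rho> - s) ^ s * fact (\<rho> - s - 1) \<le> (fact (\<rho> - s + s - 1) :: nat)"
    using fact_L2[of "\<rho> - s" s] sl by simp
  hence "(\<rho> - s) ^ s * fact (\<rho> - s - 1) \<le> (fact (\<rho> - 1) :: nat)" using sl by simp
  hence "real ((\<rho> - s) ^ s * fact (\<rho> - s - 1)) \<le> real (fact (\<rho> - 1) :: nat)" by (simp only: of_nat_le_iff)
  hence h: "real (\<rho> - s) ^ s * fact (\<rho> - s - 1) \<le> fact (\<rho> - 1)" by (simp add: of_nat_fact)
  have "real (\<rho> - s) ^ s * Mx p (\<rho> - s) = (real (\<rho> - s) ^ s * fact (\<rho> - s - 1)) * (real p ^ p / fact (p - 1))"
    unfolding Mx_def by simp
  also have "\<dots> \<le> fact (\<rho> - 1) * (real p ^ p / fact (p - 1))"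
    using h by (intro mult_right_mono) auto
  also have "\<dots> = Mx p \<rho>" unfolding Mx_def by simp
  finally have "real (\<rho> - s) ^ s * Mx p (\<rho> - s) \<le> Mx p \<rho>" .
  hence "(real (\<rho> - s) ^ s * Mx p (\<rho> - s)) ^ r \<le> Mx p \<rho> ^ r"
    using Mx_nonneg by (intro power_mono) auto
  moreover have "Bd r p s (\<rho> - s) = (real (\<rho> - s) ^ s * Mx p (\<rho> - s)) ^ r"
  proof -
    have e: "real (\<rho> - s) ^ (r * s) = (real (\<rho> - s) ^ s) ^ r" by (metis power_mult mult.commute)
    have "Bd r p s (\<rho> - s) = real (\<rho> - s) ^ (r * s) * Mx p (\<rho> - s) ^ r" using sl by (simp add: Bd_def)
    also have "\<dots> = (real (\<rho> - s) ^ s * Mx p (\<rho> - s)) ^ r" by (simp only: e power_mult_distrib)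
    finally show ?thesis .
  qed
  ultimately show ?thesis by simp
qed

lemma Fn_Un: "Fn n r (A \<union> R) = PiE (A \<times> {..<r} \<union> R \<times> {..<r}) (\<lambda>_. {..<n})"
  unfolding Fn_def by (simp add: Sigma_Un_distrib1)

lemma finite_Fn: "finite X \<Longrightarrow> finite (Fn n r X)"
  unfolding Fn_def by (intro finite_PiE) auto

lemma card_PiE_const_le:
  assumes "finite A" "finite Y" "card Y \<le> c"
  shows "card (PiE (A \<times> {..<r}) (\<lambda>_. Y)) \<le> c ^ (r * card A)"
proof -
  have "card (PiE (A \<times> {..<r}) (\<lambda>_. Y)) = card Y ^ (card A * r)"
    using assms by (simp add: card_PiE card_cartesian_product)
  also have "\<dots> \<le> c ^ (card A * r)" using assms by (intro power_mono) auto
  finally show ?thesis by (simp add: mult.commute)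
qed

lemma count_Good:
  assumes A0: "finite A0" "card A0 = p" "1 \<le> p"
  shows "finite A \<Longrightarrow> finite R \<Longrightarrow> A \<inter> R = {} \<Longrightarrow>
    real (card {g \<in> Fn n r (A \<union> R). Good r A0 L A R g}) \<le> Bd r p (card A) (card R)"
proof (induction L arbitrary: A R)
  case 0
  show ?case
  proof (cases "R = {}")
    case False
    have E: "{g \<in> Fn n r (A \<union> R). Good r A0 0 A R g} = {}" using False by simp
    show ?thesis unfolding E using Bd_nonneg by simp
  next
    case True
    have sub: "{g \<in> Fn n r (A \<union> R). Good r A0 0 A R g} \<subseteq> PiE (A \<times> {..<r}) (\<lambda>_. A0 \<inter> {..<n})"
    proof
      fix g assume g: "g \<in> {g \<in> Fn n r (A \<union> R). Good r A0 0 A R g}"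
      hence g1: "g \<in> PiE (A \<times> {..<r}) (\<lambda>_. {..<n})" and g2: "tau_one r g A \<subseteq> A0"
        using True by (auto simp: Fn_def)
      have "\<forall>x\<in>A \<times> {..<r}. g x \<in> A0"
      proof
        fix x assume x: "x \<in> A \<times> {..<r}"
        then obtain q a where "x = (q, a)" "q \<in> A" "a < r" by auto
        hence "g x \<in> tau_one r g A" unfolding tau_one_def by auto
        thus "g x \<in> A0" using g2 by auto
      qed
      thus "g \<in> PiE (A \<times> {..<r}) (\<lambda>_. A0 \<inter> {..<n})" using g1 by (auto simp: PiE_iff)
    qed
    have "card {g \<in> Fn n r (A \<union> R). Good r A0 0 A R g} \<le> card (PiE (A \<times> {..<r}) (\<lambda>_. A0 \<inter> {..<n}))"
      using 0 by (intro card_mono[OF _ sub] finite_PiE) auto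
    also have "\<dots> \<le> p ^ (r * card A)"
      using 0 A0 by (intro card_PiE_const_le) (auto intro: card_mono)
    finally have "real (card {g \<in> Fn n r (A \<union> R). Good r A0 0 A R g}) \<le> real (p ^ (r * card A))"
      by (simp only: of_nat_le_iff)
    thus ?thesis using True by (simp add: Bd_def)
  qed
next
  case (Suc L)
  show ?case
  proof (cases "R = {}")
    case True
    have E: "{g \<in> Fn n r (A \<union> R). Good r A0 (Suc L) A R g} = {}" using True by auto
    show ?thesis unfolding E using Bd_nonneg by simp
  next
    case False
    define I where "I = {B. B \<subseteq> R \<and> B \<noteq> {}}"
    define S where "S B = {g \<in> Fn n r (A \<union> R). tau_one r g A = B \<and> Good r A0 L B (R - B) g}" for B
    define T1 where "T1 B = {g \<in> PiE (A \<times> {..<r}) (\<lambda>_. {..<n}). tau_one r g A = B}" for B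
    define T2 where "T2 B = {g \<in> PiE (R \<times> {..<r}) (\<lambda>_. {..<n}). Good r A0 L B (R - B) g}" for B
    have IP: "I \<subseteq> Pow R" unfolding I_def by blast
    have finI: "finite I" using finite_subset[OF IP] Suc.prems(2) by simp
    have sub: "{g \<in> Fn n r (A \<union> R). Good r A0 (Suc L) A R g} \<subseteq> (\<Union>B\<in>I. S B)"
    proof
      fix g assume g: "g \<in> {g \<in> Fn n r (A \<union> R). Good r A0 (Suc L) A R g}"
      hence g1: "g \<in> Fn n r (A \<union> R)" and g2: "Good r A0 (Suc L) A R g" by auto
      from g2 have h: "tau_one r g A \<noteq> {}" "tau_one r g A \<subseteq> R"
        "Good r A0 L (tau_one r g A) (R - tau_one r g A) g" using Good.simps(2)[of r A0 L A R g] by blast+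
      have "tau_one r g A \<in> I" using h unfolding I_def by blast
      moreover have "g \<in> S (tau_one r g A)" using g1 h(3) unfolding S_def by blast
      ultimately show "g \<in> (\<Union>B\<in>I. S B)" by blast
    qed
    have finS: "finite (\<Union>B\<in>I. S B)"
      by (rule finite_subset[of _ "Fn n r (A \<union> R)"]) (auto simp: S_def finite_Fn Suc.prems)
    have "card {g \<in> Fn n r (A \<union> R). Good r A0 (Suc L) A R g} \<le> card (\<Union>B\<in>I. S B)"
      by (rule card_mono[OF finS sub])
    also have "\<dots> \<le> (\<Sum>B\<in>I. card (S B))" by (rule card_UN_le[OF finI])
    finally have "real (card {g \<in> Fn n r (A \<union> R). Good r A0 (Suc L) A R g}) \<le> real (\<Sum>B\<in>I. card (S B))"
      by (simp only: of_nat_le_iff)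
    hence c1: "real (card {g \<in> Fn n r (A \<union> R). Good r A0 (Suc L) A R g}) \<le> (\<Sum>B\<in>I. real (card (S B)))"
      by simp
    have c2: "card (S B) \<le> card (T1 B) * card (T2 B)" if B: "B \<in> I" for B
    proof -
      have BR: "B \<union> (R - B) = R" using B by (auto simp: I_def)
      have "S B = {f \<in> PiE (A \<times> {..<r} \<union> R \<times> {..<r}) (\<lambda>_. {..<n}). tau_one r f A = B \<and> Good r A0 L B (R - B) f}"
        unfolding S_def Fn_Un ..
      also have "card \<dots> \<le> card (T1 B) * card (T2 B)"
        unfolding T1_def T2_def
      proof (rule card_split)
        show "finite (A \<times> {..<r})" "finite (R \<times> {..<r})" using Suc.prems by auto
        show "A \<times> {..<r} \<inter> R \<times> {..<r} = {}" using Suc.prems by auto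
        show "finite {..<n}" for x :: "nat \<times> nat" by simp
        show "tau_one r f A = B \<longleftrightarrow> tau_one r g A = B" if "\<forall>x\<in>A \<times> {..<r}. f x = g x" for f g
          using tau_one_cong[OF that] by simp
        show "Good r A0 L B (R - B) f = Good r A0 L B (R - B) g" if "\<forall>x\<in>R \<times> {..<r}. f x = g x" for f g
          using that BR by (intro Good_cong) simp
      qed
      finally show ?thesis .
    qed
    have c3: "real (card (T2 B)) \<le> Mx p (card R) ^ r" if B: "B \<in> I" for B
    proof -
      have BR: "B \<union> (R - B) = R" "B \<subseteq> R" "B \<noteq> {}" using B by (auto simp: I_def)
      have finB: "finite B" using BR Suc.prems finite_subset by blast
      have "T2 B = {g \<in> Fn n r (B \<union> (R - B)). Good r A0 L B (R - B) g}"
        unfolding T2_def Fn_def BR(1) ..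
      hence "real (card (T2 B)) \<le> Bd r p (card B) (card (R - B))"
        using Suc.IH[of B "R - B"] finB Suc.prems by auto
      also have "card (R - B) = card R - card B" using BR finB by (simp add: card_Diff_subset)
      also have "Bd r p (card B) (card R - card B) \<le> Mx p (card R) ^ r"
        using A0 BR finB Suc.prems by (intro Bd_le) (auto simp: card_mono card_gt_0_iff Suc_le_eq)
      finally show ?thesis .
    qed
    have c4: "(\<Sum>B\<in>I. real (card (T1 B))) \<le> real (card R) ^ (r * card A)"
    proof -
      have finT: "finite (T1 B)" for B
        unfolding T1_def by (rule finite_subset[of _ "PiE (A \<times> {..<r}) (\<lambda>_. {..<n})"]) (use Suc.prems in \<open>auto intro!: finite_PiE\<close>)
      have disj: "\<forall>B\<in>I. \<forall>B'\<in>I. B \<noteq> B' \<longrightarrow> T1 B \<inter> T1 B' = {}" unfolding T1_def by auto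
      have "(\<Sum>B\<in>I. card (T1 B)) = card (\<Union>B\<in>I. T1 B)"
        using card_UN_disjoint[OF finI _ disj] finT by simp
      also have "\<dots> \<le> card (PiE (A \<times> {..<r}) (\<lambda>_. R \<inter> {..<n}))"
      proof (rule card_mono)
        show "finite (PiE (A \<times> {..<r}) (\<lambda>_. R \<inter> {..<n}))" using Suc.prems by (intro finite_PiE) auto
        show "(\<Union>B\<in>I. T1 B) \<subseteq> PiE (A \<times> {..<r}) (\<lambda>_. R \<inter> {..<n})"
        proof
          fix g assume "g \<in> (\<Union>B\<in>I. T1 B)"
          then obtain B where B: "B \<in> I" "g \<in> PiE (A \<times> {..<r}) (\<lambda>_. {..<n})" "tau_one r g A = B"
            unfolding T1_def by auto
          have "\<forall>x\<in>A \<times> {..<r}. g x \<in> R"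
          proof
            fix x assume x: "x \<in> A \<times> {..<r}"
            then obtain q a where "x = (q, a)" "q \<in> A" "a < r" by auto
            hence "g x \<in> tau_one r g A" unfolding tau_one_def by auto
            thus "g x \<in> R" using B by (auto simp: I_def)
          qed
          thus "g \<in> PiE (A \<times> {..<r}) (\<lambda>_. R \<inter> {..<n})" using B(2) by (auto simp: PiE_iff)
        qed
      qed
      also have "\<dots> \<le> card R ^ (r * card A)"
        using Suc.prems by (intro card_PiE_const_le) (auto intro: card_mono)
      finally have "(\<Sum>B\<in>I. card (T1 B)) \<le> card R ^ (r * card A)" .
      hence "real (\<Sum>B\<in>I. card (T1 B)) \<le> real (card R ^ (r * card A))" by (simp only: of_nat_le_iff)
      thus ?thesis by simp
    qed
    have "(\<Sum>B\<in>I. real (card (S B))) \<le> (\<Sum>B\<in>I. real (card (T1 B)) * Mx p (card R) ^ r)"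
    proof (rule sum_mono)
      fix B assume B: "B \<in> I"
      have "real (card (S B)) \<le> real (card (T1 B)) * real (card (T2 B))"
        using c2[OF B] by (metis of_nat_le_iff of_nat_mult)
      also have "\<dots> \<le> real (card (T1 B)) * Mx p (card R) ^ r"
        using c3[OF B] by (intro mult_left_mono) auto
      finally show "real (card (S B)) \<le> real (card (T1 B)) * Mx p (card R) ^ r" .
    qed
    also have "\<dots> = (\<Sum>B\<in>I. real (card (T1 B))) * Mx p (card R) ^ r"
      by (simp add: sum_distrib_right)
    also have "\<dots> \<le> real (card R) ^ (r * card A) * Mx p (card R) ^ r"
      using c4 Mx_nonneg by (intro mult_right_mono) auto
    also have "\<dots> = Bd r p (card A) (card R)"
      using False Suc.prems by (simp add: Bd_def)
    finally show ?thesis using c1 by linarith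
  qed
qed

lemma mod_shift_inv: "i < k \<Longrightarrow> i0 < k \<Longrightarrow> ((i + (k - i0)) mod k + i0) mod k = (i::nat)"
proof -
  assume a: "i < k" "i0 < k"
  have "((i + (k - i0)) mod k + i0) mod k = (i + (k - i0) + i0) mod k" by (simp add: mod_add_left_eq)
  also have "i + (k - i0) + i0 = i + k" using a by simp
  finally show ?thesis using a by simp
qed

lemma mod_shift_inv2: "i < k \<Longrightarrow> i0 < k \<Longrightarrow> ((i + i0) mod k + (k - i0)) mod k = (i::nat)"
proof -
  assume a: "i < k" "i0 < k"
  have "((i + i0) mod k + (k - i0)) mod k = (i + i0 + (k - i0)) mod k" by (simp add: mod_add_left_eq)
  also have "i + i0 + (k - i0) = i + k" using a by simp
  finally show ?thesis using a by simp
qed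

lemma periodic_Good:
  assumes "periodic_class k n r \<tau> C"
  shows "C \<subseteq> {..<n} \<and> (\<exists>P0. P0 \<subseteq> C \<and> 1 \<le> card P0 \<and> 2 * card P0 \<le> card C \<and>
           Good r P0 (k - 1) P0 (C - P0) \<tau>)"
proof -
  from assms have k: "k > 1" and cc: "closed_comm_class n r \<tau> C"
    unfolding periodic_class_def by auto
  from assms obtain P :: "nat \<Rightarrow> nat set" where
    pne: "\<forall>i<k. P i \<noteq> {}" and pdisj: "\<forall>i<k. \<forall>j<k. i \<noteq> j \<longrightarrow> P i \<inter> P j = {}"
    and pun: "(\<Union>i<k. P i) = C" and ptau: "\<forall>i<k. tau_one r \<tau> (P i) = P ((i + 1) mod k)"
    unfolding periodic_class_def by blast
  have Cn: "C \<subseteq> {..<n}" using cc unfolding closed_comm_class_def comm_class_def by auto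
  have finC: "finite C" using Cn finite_subset by blast
  obtain i0 where i0: "i0 < k" "\<forall>i. i < k \<longrightarrow> card (P i0) \<le> card (P i)"
    using ex_has_least_nat[of "\<lambda>i. i < k" 0 "\<lambda>i. card (P i)"] k by auto
  define Q where "Q i = P ((i + i0) mod k)" for i
  have kpos: "k > 0" using k by simp
  have Qne: "Q i \<noteq> {}" if "i < k" for i unfolding Q_def using pne kpos by simp
  have Qsub: "Q i \<subseteq> C" for i unfolding Q_def using pun kpos by auto
  have Qdisj: "Q i \<inter> Q j = {}" if "i < k" "j < k" "i \<noteq> j" for i j
  proof -
    have "(i + i0) mod k \<noteq> (j + i0) mod k"
      using mod_shift_inv2[OF that(1) i0(1)] mod_shift_inv2[OF that(2) i0(1)] that(3) by metis
    thus ?thesis unfolding Q_def using pdisj kpos by simp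
  qed
  have Qtau: "tau_one r \<tau> (Q i) = Q ((i + 1) mod k)" for i
  proof -
    have "tau_one r \<tau> (Q i) = P (((i + i0) mod k + 1) mod k)" unfolding Q_def using ptau kpos by simp
    also have "((i + i0) mod k + 1) mod k = (i + i0 + 1) mod k" by (rule mod_add_left_eq)
    also have "(i + i0 + 1) mod k = ((i + 1) mod k + i0) mod k"
      using mod_add_left_eq[of "i + 1" k i0] by (simp add: add_ac)
    finally show ?thesis unfolding Q_def .
  qed
  have Qun: "(\<Union>i<k. Q i) = C"
  proof
    show "(\<Union>i<k. Q i) \<subseteq> C" using Qsub by auto
    show "C \<subseteq> (\<Union>i<k. Q i)"
    proof
      fix x assume "x \<in> C"
      then obtain i where i: "i < k" "x \<in> P i" using pun by auto
      let ?i' = "(i + (k - i0)) mod k"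
      have "Q ?i' = P i" unfolding Q_def using mod_shift_inv[OF i(1) i0(1)] by simp
      moreover have "?i' < k" using kpos by simp
      ultimately show "x \<in> (\<Union>i<k. Q i)" using i by blast
    qed
  qed
  have main: "\<forall>j. j + L = k - 1 \<longrightarrow> Good r (Q 0) L (Q j) (\<Union>i\<in>{j<..<k}. Q i) \<tau>" for L
  proof (induction L)
    case 0
    show ?case
    proof (intro allI impI)
      fix j assume j: "j + 0 = k - 1"
      have e: "{j<..<k} = {}" using j by auto
      have "(j + 1) mod k = 0" using j k by simp
      hence "tau_one r \<tau> (Q j) = Q 0" using Qtau[of j] by simp
      thus "Good r (Q 0) 0 (Q j) (\<Union>i\<in>{j<..<k}. Q i) \<tau>" using e by simp
    qed
  next
    case (Suc L)
    show ?case
    proof (intro allI impI)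
      fix j assume j: "j + Suc L = k - 1"
      have j1: "j + 1 < k" using j by simp
      have t: "tau_one r \<tau> (Q j) = Q (j + 1)" using Qtau[of j] j1 by simp
      have R: "(\<Union>i\<in>{j<..<k}. Q i) - Q (j + 1) = (\<Union>i\<in>{j + 1<..<k}. Q i)"
      proof
        show "(\<Union>i\<in>{j<..<k}. Q i) - Q (j + 1) \<subseteq> (\<Union>i\<in>{j + 1<..<k}. Q i)"
        proof
          fix x assume "x \<in> (\<Union>i\<in>{j<..<k}. Q i) - Q (j + 1)"
          then obtain i where "i \<in> {j<..<k}" "x \<in> Q i" "x \<notin> Q (j + 1)" by auto
          moreover hence "i \<noteq> j + 1" by auto
          ultimately show "x \<in> (\<Union>i\<in>{j + 1<..<k}. Q i)" by auto
        qed
        show "(\<Union>i\<in>{j + 1<..<k}. Q i) \<subseteq> (\<Union>i\<in>{j<..<k}. Q i) - Q (j + 1)"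
        proof
          fix x assume "x \<in> (\<Union>i\<in>{j + 1<..<k}. Q i)"
          then obtain i where i: "i \<in> {j + 1<..<k}" "x \<in> Q i" by auto
          have "Q i \<inter> Q (j + 1) = {}" using i j1 by (intro Qdisj) auto
          thus "x \<in> (\<Union>i\<in>{j<..<k}. Q i) - Q (j + 1)" using i by auto
        qed
      qed
      have "Good r (Q 0) L (Q (j + 1)) (\<Union>i\<in>{j + 1<..<k}. Q i) \<tau>"
        using Suc.IH j by auto
      moreover have "Q (j + 1) \<noteq> {}" using Qne j1 by simp
      moreover have "Q (j + 1) \<subseteq> (\<Union>i\<in>{j<..<k}. Q i)" using j1 by auto
      ultimately show "Good r (Q 0) (Suc L) (Q j) (\<Union>i\<in>{j<..<k}. Q i) \<tau>"
        using t R by simp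
    qed
  qed
  have G: "Good r (Q 0) (k - 1) (Q 0) (\<Union>i\<in>{0<..<k}. Q i) \<tau>" using main[of "k - 1"] by simp
  have R0: "(\<Union>i\<in>{0<..<k}. Q i) = C - Q 0"
  proof
    show "(\<Union>i\<in>{0<..<k}. Q i) \<subseteq> C - Q 0"
    proof
      fix x assume "x \<in> (\<Union>i\<in>{0<..<k}. Q i)"
      then obtain i where i: "i \<in> {0<..<k}" "x \<in> Q i" by auto
      have "Q i \<inter> Q 0 = {}" using i kpos by (intro Qdisj) auto
      thus "x \<in> C - Q 0" using i Qsub by auto
    qed
    show "C - Q 0 \<subseteq> (\<Union>i\<in>{0<..<k}. Q i)"
    proof
      fix x assume x: "x \<in> C - Q 0"
      then obtain i where i: "i < k" "x \<in> Q i" using Qun by auto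
      have "i \<noteq> 0"
      proof
        assume "i = 0" thus False using i x by simp
      qed
      thus "x \<in> (\<Union>i\<in>{0<..<k}. Q i)" using i by auto
    qed
  qed
  have fin0: "finite (Q 0)" "finite (Q 1)" using Qsub finC finite_subset by blast+
  have c1: "1 \<le> card (Q 0)" using Qne[of 0] kpos fin0 by (simp add: Suc_le_eq card_gt_0_iff)
  have "card (Q 0) \<le> card (Q 1)" unfolding Q_def using i0 kpos by simp
  moreover have "card (Q 0) + card (Q 1) \<le> card C"
  proof -
    have "card (Q 0) + card (Q 1) = card (Q 0 \<union> Q 1)"
      using Qdisj[of 0 1] k fin0 by (simp add: card_Un_disjoint)
    also have "\<dots> \<le> card C" using Qsub finC by (intro card_mono) auto
    finally show ?thesis .
  qed
  ultimately have c2: "2 * card (Q 0) \<le> card C" by simp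
  show ?thesis using Cn Qsub c1 c2 G R0 by metis
qed

lemma prob_eq:
  assumes "n \<ge> 1"
  shows "measure_pmf.prob (random_dfa n r) {D. has_periodic_class n r k m D}
       = real (card {\<tau> \<in> Fn n r {..<n}. \<exists>C. periodic_class k n r \<tau> C \<and> card C = m})
         / real (card (Fn n r {..<n}))"
proof -
  define Phi where "Phi = PiE {..<n} (\<lambda>_. (UNIV :: bool set))"
  define Ev where "Ev = {\<tau> \<in> Fn n r {..<n}. \<exists>C. periodic_class k n r \<tau> C \<and> card C = m}"
  have sp: "dfa_space n r = {..<n} \<times> (Fn n r {..<n} \<times> Phi)"
    unfolding dfa_space_def Fn_def Phi_def by auto
  have ev: "dfa_space n r \<inter> {D. has_periodic_class n r k m D} = {..<n} \<times> (Ev \<times> Phi)"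
    unfolding sp Ev_def by (auto simp: has_periodic_class_def trans_def)
  have finPhi: "finite Phi" unfolding Phi_def by (intro finite_PiE) auto
  have nePhi: "Phi \<noteq> {}" unfolding Phi_def by (simp add: PiE_eq_empty_iff)
  have finFn: "finite (Fn n r {..<n})" by (rule finite_Fn) simp
  have neFn: "Fn n r {..<n} \<noteq> {}" unfolding Fn_def using assms by (auto simp: PiE_eq_empty_iff)
  have fin: "finite (dfa_space n r)" unfolding sp using finPhi finFn by simp
  have n0: "{..<n} \<noteq> {}" using assms lessThan_empty_iff by (metis not_one_le_zero)
  have ne: "dfa_space n r \<noteq> {}" unfolding sp using nePhi neFn n0 by blast
  have cPhi: "card Phi > 0" using finPhi nePhi by (simp add: card_gt_0_iff)
  have "measure_pmf.prob (random_dfa n r) {D. has_periodic_class n r k m D}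
      = real (card ({..<n} \<times> (Ev \<times> Phi))) / real (card ({..<n} \<times> (Fn n r {..<n} \<times> Phi)))"
    unfolding random_dfa_def measure_pmf_of_set[OF ne fin] ev sp[symmetric] ..
  also have "\<dots> = (real n * (real (card Ev) * real (card Phi))) / (real n * (real (card (Fn n r {..<n})) * real (card Phi)))"
    by (simp add: card_cartesian_product)
  also have "\<dots> = real (card Ev) / real (card (Fn n r {..<n}))"
    using cPhi assms by simp
  finally show ?thesis unfolding Ev_def .
qed

lemma Gd_bound:
  assumes C: "C \<subseteq> {..<n}" "card C = m" and P0: "P0 \<subseteq> C" "card P0 = p" "1 \<le> p" "2 * p \<le> m"
    and r: "r \<ge> 2"
  shows "real (card {\<tau> \<in> Fn n r {..<n}. Good r P0 (k - 1) P0 (C - P0) \<tau>})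
         \<le> (real (m - p) ^ m * exp (real p - real (m - p)) / real n ^ m) ^ 2 * real (card (Fn n r {..<n}))"
proof -
  define \<rho> where "\<rho> = m - p"
  have finC: "finite C" using C finite_subset by blast
  have finP: "finite P0" using P0 finC finite_subset by blast
  have mn: "m \<le> n" using C card_mono[of "{..<n}" C] by simp
  have \<rho>: "1 \<le> \<rho>" "p \<le> \<rho>" "\<rho> \<le> n" "m = p + \<rho>" using P0 mn by (auto simp: \<rho>_def)
  have npos: "real n > 0" using \<rho> by simp
  define I where "I = C \<times> {..<r}"
  define J where "J = ({..<n} - C) \<times> {..<r}"
  have IJ: "Fn n r {..<n} = PiE (I \<union> J) (\<lambda>_. {..<n})"
    unfolding Fn_def I_def J_def using C by (metis Diff_partition Sigma_Un_distrib1)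
  have "card {\<tau> \<in> Fn n r {..<n}. Good r P0 (k - 1) P0 (C - P0) \<tau>}
      = card {f \<in> PiE (I \<union> J) (\<lambda>_. {..<n}). Good r P0 (k - 1) P0 (C - P0) f \<and> True}"
    unfolding IJ by simp
  also have "\<dots> \<le> card {f \<in> PiE I (\<lambda>_. {..<n}). Good r P0 (k - 1) P0 (C - P0) f} * card {f \<in> PiE J (\<lambda>_. {..<n}). True}"
  proof (rule card_split)
    show "finite I" "finite J" unfolding I_def J_def using finC by auto
    show "I \<inter> J = {}" unfolding I_def J_def by auto
    show "finite {..<n}" for x :: "nat \<times> nat" by simp
    show "Good r P0 (k - 1) P0 (C - P0) f = Good r P0 (k - 1) P0 (C - P0) g" if "\<forall>x\<in>I. f x = g x" for f g
      using that P0 unfolding I_def by (intro Good_cong) (auto simp: Un_absorb1)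
  qed simp
  finally have c0: "card {\<tau> \<in> Fn n r {..<n}. Good r P0 (k - 1) P0 (C - P0) \<tau>}
      \<le> card {f \<in> PiE I (\<lambda>_. {..<n}). Good r P0 (k - 1) P0 (C - P0) f} * card (PiE J (\<lambda>_. {..<n}))" by simp
  have cG: "real (card {f \<in> PiE I (\<lambda>_. {..<n}). Good r P0 (k - 1) P0 (C - P0) f})
      \<le> real \<rho> ^ (r * p) * Mx p \<rho> ^ r"
  proof -
    have e: "PiE I (\<lambda>_. {..<n}) = Fn n r (P0 \<union> (C - P0))" unfolding I_def Fn_def using P0 by (simp add: Un_absorb1)
    have "real (card {g \<in> Fn n r (P0 \<union> (C - P0)). Good r P0 (k - 1) P0 (C - P0) g})
        \<le> Bd r p (card P0) (card (C - P0))"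
      using count_Good[of P0 p P0 "C - P0" n r "k - 1"] finP finC P0 by auto
    also have "card (C - P0) = \<rho>" using P0 finP C by (simp add: card_Diff_subset \<rho>_def)
    also have "Bd r p (card P0) \<rho> = real \<rho> ^ (r * p) * Mx p \<rho> ^ r" using \<rho> P0 by (simp add: Bd_def)
    finally show ?thesis unfolding e .
  qed
  have cJ: "card (PiE J (\<lambda>_. {..<n})) = n ^ ((n - m) * r)"
  proof -
    have "card ({..<n} - C) = n - m" using C finC by (simp add: card_Diff_subset)
    thus ?thesis unfolding J_def using finC by (simp add: card_PiE card_cartesian_product)
  qed
  have cF: "card (Fn n r {..<n}) = n ^ (n * r)"
    unfolding Fn_def by (simp add: card_PiE card_cartesian_product)
  define Y where "Y = real \<rho> ^ p * Mx p \<rho> / real n ^ m"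
  define X where "X = real \<rho> ^ m * exp (real p - real \<rho>) / real n ^ m"
  have Ynn: "Y \<ge> 0" unfolding Y_def Mx_def by simp
  have YX: "Y \<le> X"
  proof -
    have "fact (p + (\<rho> - p) - 1) / fact (p - 1) \<le> real (p + (\<rho> - p)) ^ (p + (\<rho> - p)) * exp (- real (\<rho> - p)) / real p ^ p"
      using fact_ratio[of p "\<rho> - p"] P0 by simp
    hence "fact (\<rho> - 1) / fact (p - 1) \<le> real \<rho> ^ \<rho> * exp (real p - real \<rho>) / real p ^ p"
      using \<rho> by (simp add: of_nat_diff)
    hence "fact (\<rho> - 1) / fact (p - 1) * real p ^ p \<le> real \<rho> ^ \<rho> * exp (real p - real \<rho>) / real p ^ p * real p ^ p"
      by (intro mult_right_mono) auto
    also have "\<dots> = real \<rho> ^ \<rho> * exp (real p - real \<rho>)" using P0 by simp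
    finally have "fact (\<rho> - 1) / fact (p - 1) * real p ^ p \<le> real \<rho> ^ \<rho> * exp (real p - real \<rho>)" .
    hence M: "Mx p \<rho> \<le> real \<rho> ^ \<rho> * exp (real p - real \<rho>)" unfolding Mx_def by simp
    have "real \<rho> ^ p * Mx p \<rho> \<le> real \<rho> ^ p * (real \<rho> ^ \<rho> * exp (real p - real \<rho>))"
      using M by (intro mult_left_mono) auto
    also have "\<dots> = real \<rho> ^ m * exp (real p - real \<rho>)" using \<rho> by (simp add: power_add)
    finally show ?thesis unfolding Y_def X_def using npos by (intro divide_right_mono) auto
  qed
  have X1: "X \<le> 1"
  proof -
    have "real \<rho> ^ m \<le> real n ^ m" using \<rho> by (intro power_mono) auto
    moreover have "exp (real p - real \<rho>) \<le> 1" using \<rho> by simp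
    ultimately have "real \<rho> ^ m * exp (real p - real \<rho>) \<le> real n ^ m * 1"
      by (intro mult_mono) auto
    thus ?thesis unfolding X_def using npos by (simp add: divide_le_eq_1)
  qed
  have YrX: "Y ^ r \<le> X ^ 2"
  proof -
    have "Y ^ r \<le> X ^ r" using Ynn YX by (intro power_mono) auto
    also have "X ^ r \<le> X ^ 2" using X1 Ynn YX r by (intro power_decreasing) auto
    finally show ?thesis .
  qed
  have key: "real \<rho> ^ (r * p) * Mx p \<rho> ^ r * real n ^ ((n - m) * r) = Y ^ r * real n ^ (n * r)"
  proof -
    have nn: "real n ^ (n * r) = real n ^ (m * r) * real n ^ ((n - m) * r)"
      using mn by (simp flip: power_add add_mult_distrib)
    have "Y ^ r * real n ^ (m * r) = real \<rho> ^ (r * p) * Mx p \<rho> ^ r"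
      unfolding Y_def using npos
      by (simp add: power_divide power_mult_distrib power_mult[symmetric] mult.commute)
    thus ?thesis unfolding nn by (simp add: mult.assoc)
  qed
  have "card {\<tau> \<in> Fn n r {..<n}. Good r P0 (k - 1) P0 (C - P0) \<tau>}
      \<le> card {f \<in> PiE I (\<lambda>_. {..<n}). Good r P0 (k - 1) P0 (C - P0) f} * n ^ ((n - m) * r)"
    using c0 cJ by simp
  hence "real (card {\<tau> \<in> Fn n r {..<n}. Good r P0 (k - 1) P0 (C - P0) \<tau>})
      \<le> real (card {f \<in> PiE I (\<lambda>_. {..<n}). Good r P0 (k - 1) P0 (C - P0) f} * n ^ ((n - m) * r))"
    by (simp only: of_nat_le_iff)
  hence "real (card {\<tau> \<in> Fn n r {..<n}. Good r P0 (k - 1) P0 (C - P0) \<tau>})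
      \<le> real (card {f \<in> PiE I (\<lambda>_. {..<n}). Good r P0 (k - 1) P0 (C - P0) f}) * real n ^ ((n - m) * r)"
    by simp
  also have "\<dots> \<le> real \<rho> ^ (r * p) * Mx p \<rho> ^ r * real n ^ ((n - m) * r)"
    using cG by (intro mult_right_mono) auto
  also have "\<dots> = Y ^ r * real (card (Fn n r {..<n}))" unfolding key cF by simp
  also have "\<dots> \<le> X ^ 2 * real (card (Fn n r {..<n}))" using YrX by (intro mult_right_mono) auto
  finally show ?thesis unfolding X_def \<rho>_def .
qed

lemma term_bound:
  assumes "1 \<le> p" "2 * p \<le> m" "m \<le> n"
  shows "real (n choose m) * real (m choose p) * (real (m - p) ^ m * exp (real p - real (m - p)) / real n ^ m) ^ 2
         \<le> exp (- (3/4 - 2 / exp 1) * real m)"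
proof -
  have mpos: "real m > 0" "real n > 0" using assms by auto
  have e2: "exp (real p - real (m - p)) ^ 2 = exp (4 * real p - 2 * real m)"
  proof -
    have "exp (real p - real (m - p)) ^ 2 = exp (real (2::nat) * (real p - real (m - p)))"
      by (simp only: exp_of_nat_mult)
    also have "real (2::nat) * (real p - real (m - p)) = 4 * real p - 2 * real m"
      using assms by (simp add: of_nat_diff)
    finally show ?thesis .
  qed
  have sq: "(real (m - p) ^ m * exp (real p - real (m - p)) / real n ^ m) ^ 2
        = (real m / real n) ^ (2 * m) * ((real (m - p) / real m) ^ (2 * m) * exp (4 * real p - 2 * real m))"
  proof -
    have "(real (m - p) ^ m * exp (real p - real (m - p)) / real n ^ m) ^ 2
        = (real (m - p) / real n) ^ (2 * m) * exp (real p - real (m - p)) ^ 2"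
      by (simp add: power_mult_distrib power_divide power_mult mult.commute)
    moreover have "(real (m - p) / real n) ^ (2 * m) = (real m / real n) ^ (2 * m) * (real (m - p) / real m) ^ (2 * m)"
    proof -
      have "(real m / real n) * (real (m - p) / real m) = real (m - p) / real n" using mpos by simp
      thus ?thesis by (metis power_mult_distrib)
    qed
    ultimately show ?thesis by (simp only: e2 mult.assoc)
  qed
  have "real (n choose m) * real (m choose p) * (real (m - p) ^ m * exp (real p - real (m - p)) / real n ^ m) ^ 2
      = (real (n choose m) * (real m / real n) ^ (2 * m)) *
        (real (m choose p) * (real (m - p) / real m) ^ (2 * m) * exp (4 * real p - 2 * real m))"
    unfolding sq by (simp add: mult_ac)
  also have "\<dots> \<le> exp (real m / exp 1) * exp (real m / exp 1 - 3 * real m / 4)"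
    using closed_bound[of m n] part_bound[of p m] assms by (intro mult_mono) auto
  also have "\<dots> = exp (- (3/4 - 2 / exp 1) * real m)"
    by (simp flip: exp_add add: algebra_simps)
  finally show ?thesis .
qed

lemma main_bound:
  assumes "n \<ge> 1" "m \<le> n" "2 \<le> k" "k \<le> m" "r \<ge> 2"
  shows "measure_pmf.prob (random_dfa n r) {D. has_periodic_class n r k m D}
         \<le> real (m div 2) * exp (- (3/4 - 2 / exp 1) * real m)"
proof -
  define Ev where "Ev = {\<tau> \<in> Fn n r {..<n}. \<exists>C. periodic_class k n r \<tau> C \<and> card C = m}"
  define Gd where "Gd C P0 = {\<tau> \<in> Fn n r {..<n}. Good r P0 (k - 1) P0 (C - P0) \<tau>}" for C P0
  define Cs where "Cs = {C. C \<subseteq> {..<n} \<and> card C = m}"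
  define Ps where "Ps C p = {A. A \<subseteq> C \<and> card A = p}" for C :: "nat set" and p :: nat
  define Xp where "Xp p = (real (m - p) ^ m * exp (real p - real (m - p)) / real n ^ m) ^ 2" for p
  define N where "N = real (card (Fn n r {..<n}))"
  define \<delta> :: real where "\<delta> = 3/4 - 2 / exp 1"
  have finFn: "finite (Fn n r {..<n})" by (rule finite_Fn) simp
  have neFn: "Fn n r {..<n} \<noteq> {}" unfolding Fn_def using assms by (auto simp: PiE_eq_empty_iff)
  have Npos: "N > 0" unfolding N_def using finFn neFn by (simp add: card_gt_0_iff)
  define U where "U = (\<Union>p\<in>{1..m div 2}. \<Union>C\<in>Cs. \<Union>P0\<in>Ps C p. Gd C P0)"
  have sub: "Ev \<subseteq> U"
  proof
    fix \<tau> assume "\<tau> \<in> Ev"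
    then obtain C where t: "\<tau> \<in> Fn n r {..<n}" "periodic_class k n r \<tau> C" "card C = m"
      unfolding Ev_def by blast
    from periodic_Good[OF t(2)] obtain P0 where P0: "C \<subseteq> {..<n}" "P0 \<subseteq> C" "1 \<le> card P0"
      "2 * card P0 \<le> card C" "Good r P0 (k - 1) P0 (C - P0) \<tau>" by blast
    have "card P0 \<in> {1..m div 2}" using P0 t by auto
    moreover have "C \<in> Cs" using P0 t unfolding Cs_def by auto
    moreover have "P0 \<in> Ps C (card P0)" using P0 unfolding Ps_def by auto
    moreover have "\<tau> \<in> Gd C P0" using t P0 unfolding Gd_def by auto
    ultimately show "\<tau> \<in> U" unfolding U_def by blast
  qed
  have "U \<subseteq> Fn n r {..<n}" unfolding U_def Gd_def by blast
  hence finU: "finite U" using finFn finite_subset by blast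
  have "Cs \<subseteq> Pow {..<n}" unfolding Cs_def by blast
  hence finCs: "finite Cs" using finite_subset by blast
  have finPs: "finite (Ps C p)" if "C \<in> Cs" for C p
  proof -
    have "finite C" using that unfolding Cs_def using finite_subset by blast
    moreover have "Ps C p \<subseteq> Pow C" unfolding Ps_def by blast
    ultimately show ?thesis using finite_subset by blast
  qed
  have "card Ev \<le> card U" by (rule card_mono[OF finU sub])
  also have "\<dots> \<le> (\<Sum>p\<in>{1..m div 2}. card (\<Union>C\<in>Cs. \<Union>P0\<in>Ps C p. Gd C P0))"
    unfolding U_def by (rule card_UN_le) simp
  also have "\<dots> \<le> (\<Sum>p\<in>{1..m div 2}. \<Sum>C\<in>Cs. card (\<Union>P0\<in>Ps C p. Gd C P0))"
    by (intro sum_mono card_UN_le finCs)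
  also have "\<dots> \<le> (\<Sum>p\<in>{1..m div 2}. \<Sum>C\<in>Cs. \<Sum>P0\<in>Ps C p. card (Gd C P0))"
    by (intro sum_mono card_UN_le finPs)
  finally have "real (card Ev) \<le> real (\<Sum>p\<in>{1..m div 2}. \<Sum>C\<in>Cs. \<Sum>P0\<in>Ps C p. card (Gd C P0))"
    by (simp only: of_nat_le_iff)
  hence c1: "real (card Ev) \<le> (\<Sum>p\<in>{1..m div 2}. \<Sum>C\<in>Cs. \<Sum>P0\<in>Ps C p. real (card (Gd C P0)))"
    by simp
  have c2: "(\<Sum>P0\<in>Ps C p. real (card (Gd C P0))) \<le> real (m choose p) * (Xp p * N)"
    if p: "p \<in> {1..m div 2}" and C: "C \<in> Cs" for p C
  proof -
    have "(\<Sum>P0\<in>Ps C p. real (card (Gd C P0))) \<le> (\<Sum>P0\<in>Ps C p. Xp p * N)"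
    proof (rule sum_mono)
      fix P0 assume "P0 \<in> Ps C p"
      thus "real (card (Gd C P0)) \<le> Xp p * N"
        using Gd_bound[of C n m P0 p r k] p C assms unfolding Gd_def Xp_def N_def Ps_def Cs_def by auto
    qed
    also have "\<dots> = real (card (Ps C p)) * (Xp p * N)" by simp
    also have "card (Ps C p) = m choose p"
    proof -
      have "finite C" "card C = m" using C unfolding Cs_def using finite_subset by auto
      thus ?thesis unfolding Ps_def using n_subsets[of C p] by simp
    qed
    finally show ?thesis .
  qed
  have c3: "(\<Sum>C\<in>Cs. \<Sum>P0\<in>Ps C p. real (card (Gd C P0))) \<le> real (n choose m) * (real (m choose p) * (Xp p * N))"
    if p: "p \<in> {1..m div 2}" for p
  proof -
    have "(\<Sum>C\<in>Cs. \<Sum>P0\<in>Ps C p. real (card (Gd C P0))) \<le> (\<Sum>C\<in>Cs. real (m choose p) * (Xp p * N))"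
      using c2[OF p] by (intro sum_mono) auto
    also have "\<dots> = real (card Cs) * (real (m choose p) * (Xp p * N))" by simp
    also have "card Cs = n choose m" unfolding Cs_def using n_subsets[of "{..<n}" m] by simp
    finally show ?thesis .
  qed
  have c4: "real (n choose m) * (real (m choose p) * (Xp p * N)) \<le> exp (- \<delta> * real m) * N"
    if p: "p \<in> {1..m div 2}" for p
  proof -
    have "real (n choose m) * real (m choose p) * Xp p \<le> exp (- \<delta> * real m)"
      using term_bound[of p m n] p assms unfolding Xp_def \<delta>_def by auto
    hence "(real (n choose m) * real (m choose p) * Xp p) * N \<le> exp (- \<delta> * real m) * N"
      using Npos by (intro mult_right_mono) auto
    thus ?thesis by (simp add: mult_ac)
  qed
  have "(\<Sum>p\<in>{1..m div 2}. \<Sum>C\<in>Cs. \<Sum>P0\<in>Ps C p. real (card (Gd C P0)))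
      \<le> (\<Sum>p\<in>{1..m div 2}. exp (- \<delta> * real m) * N)"
  proof (rule sum_mono)
    fix p assume p: "p \<in> {1..m div 2}"
    show "(\<Sum>C\<in>Cs. \<Sum>P0\<in>Ps C p. real (card (Gd C P0))) \<le> exp (- \<delta> * real m) * N"
      using c3[OF p] c4[OF p] by linarith
  qed
  hence "real (card Ev) \<le> (\<Sum>p\<in>{1..m div 2}. exp (- \<delta> * real m) * N)"
    using c1 by linarith
  also have "\<dots> = real (m div 2) * exp (- \<delta> * real m) * N" by simp
  finally have "real (card Ev) / N \<le> real (m div 2) * exp (- \<delta> * real m)"
    using Npos by (simp add: divide_le_eq)
  moreover have "measure_pmf.prob (random_dfa n r) {D. has_periodic_class n r k m D} = real (card Ev) / N"
    unfolding Ev_def N_def using prob_eq assms by simp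
  ultimately show ?thesis unfolding \<delta>_def by simp
qed

theorem lemma3:
  fixes r :: nat
  assumes "r \<ge> 2"
  shows "\<exists>\<alpha>::real > 0. \<exists>C'::real > 0. \<forall>n m k :: nat.
           n \<ge> 1 \<longrightarrow> m \<le> n \<longrightarrow> 2 \<le> k \<longrightarrow> k \<le> m \<longrightarrow>
           measure_pmf.prob (random_dfa n r) {D. has_periodic_class n r k m D}
             \<le> C' * exp (- \<alpha> * real m)"
proof -
  define \<delta> :: real where "\<delta> = 3/4 - 2 / exp 1"
  have dpos: "\<delta> > 0"
  proof -
    have "2 / exp 1 < (2 / (8/3) :: real)" using e_gt by (intro divide_strict_left_mono) auto
    thus ?thesis unfolding \<delta>_def by simp
  qed
  have main: "\<forall>n m k :: nat.
           n \<ge> 1 \<longrightarrow> m \<le> n \<longrightarrow> 2 \<le> k \<longrightarrow> k \<le> m \<longrightarrow>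
           measure_pmf.prob (random_dfa n r) {D. has_periodic_class n r k m D}
             \<le> 1 / \<delta> * exp (- (\<delta> / 2) * real m)"
  proof (intro allI impI)
    fix n m k :: nat
    assume a: "n \<ge> 1" "m \<le> n" "2 \<le> k" "k \<le> m"
    have "measure_pmf.prob (random_dfa n r) {D. has_periodic_class n r k m D}
        \<le> real (m div 2) * exp (- \<delta> * real m)"
      using main_bound[of n m k r] a assms unfolding \<delta>_def by simp
    also have "\<dots> \<le> 1 / \<delta> * exp (- (\<delta> / 2) * real m)"
    proof -
      have h1: "real (m div 2) \<le> real m / 2" by linarith
      have "\<delta> * real m / 2 \<le> exp (\<delta> * real m / 2)"
        using exp_ge_add_one_self[of "\<delta> * real m / 2"] by linarith
      hence h2: "real m / 2 \<le> exp (\<delta> * real m / 2) / \<delta>"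
        using dpos by (simp add: field_simps)
      have "real (m div 2) * exp (- \<delta> * real m) \<le> exp (\<delta> * real m / 2) / \<delta> * exp (- \<delta> * real m)"
      proof -
        have h3: "real (m div 2) \<le> exp (\<delta> * real m / 2) / \<delta>" using h1 h2 by linarith
        show ?thesis using h3 by (intro mult_right_mono) auto
      qed
      also have "\<dots> = 1 / \<delta> * (exp (\<delta> * real m / 2) * exp (- \<delta> * real m))" by simp
      also have "exp (\<delta> * real m / 2) * exp (- \<delta> * real m) = exp (- (\<delta> / 2) * real m)"
        by (simp flip: exp_add)
      finally show ?thesis .
    qed
    finally show "measure_pmf.prob (random_dfa n r) {D. has_periodic_class n r k m D}
        \<le> 1 / \<delta> * exp (- (\<delta> / 2) * real m)" .
  qed
  have "\<delta> / 2 > 0" "1 / \<delta> > 0" using dpos by auto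
  thus ?thesis using main by blast
qed

end
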